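(* Let $\Sigma$ be an alphabet with $\sigma\ge2$ letters, let $k\ge4$ and $n=\sigma^{k-2}$. Let $S=s_1\cdots s_n$ be a cyclic de Bruijn sequence of order $k-2$ over $\Sigma$. Let $X$ be the string $S$ followed by its first $k$ characters $s_1\cdots s_k$. Indices are taken modulo $n$. For $i=1,\dots,n$: - let $y_i=s_i s_{i+1}\cdots s_{i+k-1}$ be the cyclic $k$-mer of $S$ starting at position $i$; - choose a letter $b_i\neq s_{i+k}$ and set $z_i=s_{i+1}\cdots s_{i+k-1}b_i$. Let $I=\{X\}\cup\{y_ib_i : 1\le i\le n\}$. Then: 1. The order-$k$ node-centric de Bruijn graph $G=(V,E)$ of $I$ has exactly the $2n$ nodes $y_1,\dots,y_n,z_1,\dots,z_n$ (all distinct), and its edges are exactly $(y_i,y_{i+1})$ and $(y_i,z_i)$ for $i=1,\dots,n$; that is, $G$ is a directed $n$-cycle with one out-degree-$0$ pendant node attached to each cycle node. 2. $F=E$ is a necklace cover of $G$ consisting of a single closed necklace with $N_O=0$ and $N_L=n$, whose necklace string has $2n$ letters and $2n$ parentheses, i.e. $4n$ symbols. 3. Every spectrum-preserving string set of $I$ without repetitions has weight at least $(k+1)n$, and weight $(k+1)n$ is attained. In particular, the necklace representation uses a fraction $4/(k+1)$ of the symbols of a minimum no-repetition SPSS.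
   Context: A cyclic de Bruijn sequence of order $m$ over $\Sigma$ is a string $S$ of length $\sigma^m$ such that every string of length $m$ over $\Sigma$ occurs exactly once as a cyclic substring of $S$ (i.e. as a substring of the infinite periodic extension starting at one of the positions $1,\dots,|S|$). $\mathrm{spec}_k(I)$ denotes the set of length-$k$ substrings of strings in $I$. The order-$k$ node-centric de Bruijn graph of $I$ is $G=(V,E)$ with $V=\mathrm{spec}_k(I)$ and $(u,v)\in E$ iff the last $k-1$ characters of $u$ equal the first $k-1$ characters of $v$; the label of $(u,v)$ is the last character of $v$. A necklace cover is an edge set $F\subseteq E$ with every node of in-degree at most $1$ in $(V,F)$. Its necklaces are the weakly connected components of $(V,F)$. A necklace is closed if it has no node of in-degree $0$ in $(V,F)$, open otherwise. $N_O$ is the number of open necklaces, and $N_L=(\#\text{nodes of out-degree }0\text{ in }(V,F))-N_O$. The necklace string of a closed necklace with cycle $v_1\to\cdots\to v_c$ is formed as follows: - take one character per cycle node, namely the label of its entering edge; - immediately after the character of each cycle node $v$, insert $\mathtt{(}\mathrm{enc}(w)\mathtt{)}$ for each child $w$ of $v$ not on the cycle; - here $\mathrm{enc}(w)$ is the label of the edge entering $w$ when $w$ has no children. A spectrum-preserving string set (SPSS) of $I$ without repetitions is a finite set $S'$ of strings, each of length at least $k$, such that $\mathrm{spec}_k(S')=\mathrm{spec}_k(I)$ and each $k$-mer of $\mathrm{spec}_k(I)$ occurs exactly once in total among all occurrences in the strings of $S'$. Its weight is $\sum_{z\in S'}|z|$. *)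

theory Defs
  imports Main
begin

text \<open>Positions are 0-based and taken modulo the length of the string.\<close>
definition cyc_sub :: "'a list \<Rightarrow> nat \<Rightarrow> nat \<Rightarrow> 'a list" where
  "cyc_sub S i m = map (\<lambda>j. S ! ((i + j) mod length S)) [0..<m]"

definition cyclic_de_bruijn :: "'a set \<Rightarrow> nat \<Rightarrow> 'a list \<Rightarrow> bool" where
  "cyclic_de_bruijn Sig m S \<longleftrightarrow>
     set S \<subseteq> Sig \<and> length S = card Sig ^ m \<and>
     (\<forall>w. length w = m \<and> set w \<subseteq> Sig \<longrightarrow>
        card {i. i < length S \<and> cyc_sub S i m = w} = 1)"

definition kmers :: "nat \<Rightarrow> 'a list \<Rightarrow> 'a list set" where
  "kmers k s = {take k (drop i s) | i. i + k \<le> length s}"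

definition spec :: "nat \<Rightarrow> 'a list set \<Rightarrow> 'a list set" where
  "spec k I = (\<Union>s\<in>I. kmers k s)"

definition occ :: "nat \<Rightarrow> 'a list \<Rightarrow> 'a list \<Rightarrow> nat" where
  "occ k w z = card {i. i + k \<le> length z \<and> take k (drop i z) = w}"

definition dbg_nodes :: "nat \<Rightarrow> 'a list set \<Rightarrow> 'a list set" where
  "dbg_nodes k I = spec k I"

definition dbg_edges :: "nat \<Rightarrow> 'a list set \<Rightarrow> ('a list \<times> 'a list) set" where
  "dbg_edges k I = {(u, v). u \<in> spec k I \<and> v \<in> spec k I \<and>
                           drop 1 u = take (k - 1) v}"

definition edge_label :: "'a list \<times> 'a list \<Rightarrow> 'a" where
  "edge_label e = last (snd e)"

definition necklace_cover :: "'v set \<Rightarrow> ('v \<times> 'v) set \<Rightarrow> ('v \<times> 'v) set \<Rightarrow> bool" where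
  "necklace_cover V E F \<longleftrightarrow> F \<subseteq> E \<and>
     (\<forall>v\<in>V. \<forall>u u'. (u, v) \<in> F \<longrightarrow> (u', v) \<in> F \<longrightarrow> u = u')"

definition necklaces :: "'v set \<Rightarrow> ('v \<times> 'v) set \<Rightarrow> 'v set set" where
  "necklaces V F = {{u \<in> V. (v, u) \<in> ((F \<inter> (V \<times> V)) \<union> (F \<inter> (V \<times> V))\<inverse>)\<^sup>*} | v. v \<in> V}"

definition closed_necklace :: "('v \<times> 'v) set \<Rightarrow> 'v set \<Rightarrow> bool" where
  "closed_necklace F C \<longleftrightarrow> (\<forall>v\<in>C. \<exists>u. (u, v) \<in> F)"

definition N_O :: "'v set \<Rightarrow> ('v \<times> 'v) set \<Rightarrow> nat" where
  "N_O V F = card {C \<in> necklaces V F. \<not> closed_necklace F C}"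

definition N_L :: "'v set \<Rightarrow> ('v \<times> 'v) set \<Rightarrow> nat" where
  "N_L V F = card {v \<in> V. \<not> (\<exists>w. (v, w) \<in> F)} - N_O V F"

datatype 'a nsym = Letter 'a | LParen | RParen

fun is_letter :: "'a nsym \<Rightarrow> bool" where
  "is_letter (Letter _) = True"
| "is_letter _ = False"

fun is_paren :: "'a nsym \<Rightarrow> bool" where
  "is_paren (Letter _) = False"
| "is_paren _ = True"

text \<open>The cycle is listed as cyc (any starting point),
  children of each cycle node off the cycle are listed in some order; only the case where
  those children have no children (enc(w) = label of the edge entering w) is defined,
  as in the paper.\<close>
definition necklace_string ::
  "'a list set \<Rightarrow> ('a list \<times> 'a list) set \<Rightarrow> 'a nsym list \<Rightarrow> bool" where
  "necklace_string C F str \<longleftrightarrow>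
     (\<exists>cyc chs. cyc \<noteq> [] \<and> distinct cyc \<and> set cyc \<subseteq> C \<and>
        (\<forall>j<length cyc. (cyc ! j, cyc ! ((j + 1) mod length cyc)) \<in> F) \<and>
        (\<forall>j<length cyc. distinct (chs j) \<and>
            set (chs j) = {w \<in> C. (cyc ! j, w) \<in> F \<and> w \<notin> set cyc} \<and>
            (\<forall>w\<in>set (chs j). \<not> (\<exists>x. (w, x) \<in> F))) \<and>
        str = concat (map (\<lambda>j. [Letter (edge_label (cyc ! ((j + length cyc - 1) mod length cyc), cyc ! j))]
                 @ concat (map (\<lambda>w. [LParen, Letter (edge_label (cyc ! j, w)), RParen]) (chs j)))
              [0..<length cyc]))"

definition spss_norep :: "nat \<Rightarrow> 'a list set \<Rightarrow> 'a list set \<Rightarrow> bool" where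
  "spss_norep k I S' \<longleftrightarrow> finite S' \<and> (\<forall>z\<in>S'. length z \<ge> k) \<and>
     spec k S' = spec k I \<and>
     (\<forall>w\<in>spec k I. (\<Sum>z\<in>S'. occ k w z) = 1)"

definition weight :: "'a list set \<Rightarrow> nat" where
  "weight S' = (\<Sum>z\<in>S'. length z)"

definition ykmer :: "'a list \<Rightarrow> nat \<Rightarrow> nat \<Rightarrow> 'a list" where
  "ykmer S k i = cyc_sub S i k"

definition zkmer :: "'a list \<Rightarrow> nat \<Rightarrow> (nat \<Rightarrow> 'a) \<Rightarrow> nat \<Rightarrow> 'a list" where
  "zkmer S k b i = cyc_sub S (i + 1) (k - 1) @ [b i]"

definition inst :: "'a list \<Rightarrow> nat \<Rightarrow> (nat \<Rightarrow> 'a) \<Rightarrow> 'a list set" where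
  "inst S k b = insert (S @ take k S) {ykmer S k i @ [b i] | i. i < length S}"

end

theory Submission
  imports Defs
begin

lemma cs_len[simp]: "length (cyc_sub S i m) = m" by (simp add: cyc_sub_def)
lemma cs_nth[simp]: "j < m \<Longrightarrow> cyc_sub S i m ! j = S ! ((i+j) mod length S)"
  by (simp add: cyc_sub_def)
lemma cs_mod: "cyc_sub S (i mod length S) m = cyc_sub S i m"
  by (simp add: cyc_sub_def mod_add_left_eq)
lemma cs_take: "a \<le> m \<Longrightarrow> take a (cyc_sub S i m) = cyc_sub S i a"
  by (simp add: cyc_sub_def take_map take_upt)
lemma cs_drop1: "drop 1 (cyc_sub S i m) = cyc_sub S (Suc i) (m - 1)"
  by (rule nth_equalityI) (auto simp: add.commute add.left_commute)
lemma cs_drop1': "drop (Suc 0) (cyc_sub S i m) = cyc_sub S (Suc i) (m - 1)"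
  using cs_drop1 by simp
lemma cs_snoc: "cyc_sub S i (Suc m) = cyc_sub S i m @ [S ! ((i+m) mod length S)]"
  by (simp add: cyc_sub_def)
lemma cs_set: "length S > 0 \<Longrightarrow> set (cyc_sub S i m) \<subseteq> set S"
  by (auto simp: cyc_sub_def)


lemma pow_ge: "4 \<le> k \<Longrightarrow> k \<le> (2::nat)^(k-2)"
proof (induction k rule: nat_induct_at_least)
  case base then show ?case by simp
next
  case (Suc n)
  have "Suc n - 2 = Suc (n - 2)" using Suc.hyps by simp
  then have "2^(Suc n - 2) = 2 * (2::nat)^(n-2)" by simp
  moreover have "n \<le> 2^(n-2)" using Suc.IH .
  moreover have "4 \<le> n" using Suc.hyps .
  ultimately show ?case by linarith
qed

lemma sucmod: "i < (n::nat) \<Longrightarrow> Suc i mod n = (if Suc i = n then 0 else Suc i)"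
  by auto
lemma modsuc_inj: "i < (n::nat) \<Longrightarrow> j < n \<Longrightarrow> Suc i mod n = Suc j mod n \<Longrightarrow> i = j"
  by (simp add: sucmod split: if_splits)
lemma kmers_k1: "length w = Suc k \<Longrightarrow> kmers k w = {take k w, drop 1 w}"
proof -
  assume l: "length w = Suc k"
  have "kmers k w = (\<lambda>i. take k (drop i w)) ` {i. i \<le> 1}" unfolding kmers_def using l by auto
  also have "{i::nat. i \<le> 1} = {0,1}" by auto
  finally show ?thesis using l by simp
qed

lemma setof_image: "{f i | i. i < n} = f ` {..<(n::nat)}" by blast

lemma occ_k1: assumes l: "length x = Suc k"
  shows "occ k w x = (if take k x = w then 1 else 0) + (if drop 1 x = w then 1 else 0)"
proof -
  have t1: "take k (drop 1 x) = drop 1 x" using l by simp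
  have "{i. i + k \<le> length x \<and> take k (drop i x) = w} =
        (if take k x = w then {0} else {}) \<union> (if drop 1 x = w then {1} else {})"
  proof (intro equalityI subsetI)
    fix i :: nat assume "i \<in> {i. i + k \<le> length x \<and> take k (drop i x) = w}"
    then have i: "i \<le> 1" "take k (drop i x) = w" using l by auto
    then have "i = 0 \<or> i = 1" by auto
    then show "i \<in> (if take k x = w then {0} else {}) \<union> (if drop 1 x = w then {1} else {})"
      using i t1 by auto
  next
    fix i :: nat assume "i \<in> (if take k x = w then {0} else {}) \<union> (if drop 1 x = w then {1} else {})"
    then show "i \<in> {i. i + k \<le> length x \<and> take k (drop i x) = w}"
      using l t1 by (auto split: if_splits)
  qed
  then show ?thesis unfolding occ_def by (simp split: if_splits)
qed

lemma distinct_set_single: assumes "distinct xs" "set xs = {a}" shows "xs = [a]"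
proof (cases xs)
  case Nil then show ?thesis using assms by simp
next
  case (Cons x ys)
  note d = assms(1) and s = assms(2)
  then have "x = a" using Cons by auto
  moreover have "ys = []"
  proof -
    have "\<forall>y\<in>set ys. y = a" using s Cons by auto
    moreover have "a \<notin> set ys" using d Cons \<open>x = a\<close> by auto
    ultimately show ?thesis by (cases ys) auto
  qed
  ultimately show ?thesis using Cons by simp
qed

lemma len_concat_const: "(\<And>x. x \<in> set xs \<Longrightarrow> length (g x) = c) \<Longrightarrow> length (concat (map g xs)) = length xs * c"
  by (induction xs) auto

lemma graph_part:
  fixes Y Z :: "nat \<Rightarrow> 'a list" and n :: nat
  assumes n: "0 < n" and iY: "inj_on Y {..<n}" and iZ: "inj_on Z {..<n}"
    and YZ: "\<And>i j. i < n \<Longrightarrow> j < n \<Longrightarrow> Y i \<noteq> Z j"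
    and V: "V = Y ` {..<n} \<union> Z ` {..<n}"
    and E: "E = {(Y i, Y ((i + 1) mod n)) | i. i < n} \<union> {(Y i, Z i) | i. i < n}"
  shows "card V = 2 * n \<and> necklace_cover V E E \<and>
    (\<exists>C. necklaces V E = {C} \<and> closed_necklace E C \<and>
         (\<exists>str. necklace_string C E str) \<and>
         (\<forall>str. necklace_string C E str \<longrightarrow>
            length (filter is_letter str) = 2 * n \<and>
            length (filter is_paren str) = 2 * n \<and>
            length str = 4 * n)) \<and>
    N_O V E = 0 \<and> N_L V E = n"
proof -
  have Yeq: "\<And>i j. i < n \<Longrightarrow> j < n \<Longrightarrow> Y i = Y j \<longleftrightarrow> i = j" using iY by (auto dest: inj_onD)
  have Zeq: "\<And>i j. i < n \<Longrightarrow> j < n \<Longrightarrow> Z i = Z j \<longleftrightarrow> i = j" using iZ by (auto dest: inj_onD)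
  have E_src: "\<exists>i<n. u = Y i" if "(u, w) \<in> E" for u w using that unfolding E by blast
  have E_Y: "w = Y (Suc i mod n) \<or> w = Z i" if "(Y i, w) \<in> E" "i < n" for i w
  proof -
    from that(1) obtain i' where i': "i' < n" "(Y i, w) = (Y i', Y ((i' + 1) mod n)) \<or> (Y i, w) = (Y i', Z i')"
      unfolding E by blast
    then have "i = i'" using Yeq that(2) by auto
    then show ?thesis using i' by auto
  qed
  have Z_noout: "(Z j, w) \<notin> E" if "j < n" for j w
    using E_src[of "Z j" w] YZ that by metis
  have into_Y: "\<exists>i<n. u = Y i \<and> j = Suc i mod n" if "(u, Y j) \<in> E" "j < n" for u j
  proof -
    from that(1) obtain i where i: "i < n" "(u, Y j) = (Y i, Y ((i + 1) mod n)) \<or> (u, Y j) = (Y i, Z i)"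
      unfolding E by blast
    then show ?thesis using YZ that(2) Yeq[of j "(i+1) mod n"] n by auto
  qed
  have into_Z: "u = Y j" if "(u, Z j) \<in> E" "j < n" for u j
  proof -
    from that(1) obtain i where i: "i < n" "(u, Z j) = (Y i, Y ((i + 1) mod n)) \<or> (u, Z j) = (Y i, Z i)"
      unfolding E by blast
    then show ?thesis using YZ[of "(i+1) mod n" j] that(2) Zeq[of j i] n by auto
  qed
  have EV: "E \<subseteq> V \<times> V" unfolding E V using n by auto
  have eY: "(Y i, Y (Suc i mod n)) \<in> E" if "i < n" for i unfolding E using that by auto
  have eZ: "(Y i, Z i) \<in> E" if "i < n" for i unfolding E using that by auto
  have cardV: "card V = 2 * n"
  proof -
    have "Y ` {..<n} \<inter> Z ` {..<n} = {}" using YZ by auto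
    then have "card V = card (Y ` {..<n}) + card (Z ` {..<n})" unfolding V
      by (simp add: card_Un_disjoint)
    also have "\<dots> = n + n" using card_image[OF iY] card_image[OF iZ] by simp
    finally show ?thesis by simp
  qed
  have cover: "necklace_cover V E E"
    unfolding necklace_cover_def
  proof (intro conjI ballI allI impI subset_refl)
    fix v u u' assume v: "v \<in> V" and a: "(u, v) \<in> E" "(u', v) \<in> E"
    from v show "u = u'" unfolding V
    proof (elim UnE imageE)
      fix j assume j: "v = Y j" "j \<in> {..<n}"
      obtain i where i: "i < n" "u = Y i" "j = Suc i mod n" using into_Y a j by auto
      obtain i' where i': "i' < n" "u' = Y i'" "j = Suc i' mod n" using into_Y a j by auto
      have "i = i'" using modsuc_inj i i' by (metis mod_Suc)
      then show ?thesis using i i' by simp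
    next
      fix j assume j: "v = Z j" "j \<in> {..<n}"
      then show ?thesis using into_Z a by auto
    qed
  qed
  have reachY: "(Y 0, Y i) \<in> E\<^sup>*" if "i < n" for i
    using that
  proof (induction i)
    case 0 then show ?case by simp
  next
    case (Suc i)
    have "(Y i, Y (Suc i)) \<in> E" using eY[of i] Suc.prems by simp
    then show ?case using Suc by (metis Suc_lessD rtrancl.rtrancl_into_rtrancl)
  qed
  have reach: "(Y 0, u) \<in> E\<^sup>*" if "u \<in> V" for u
    using that unfolding V
  proof (elim UnE imageE)
    fix i assume "u = Y i" "i \<in> {..<n}" then show ?thesis using reachY by simp
  next
    fix i assume "u = Z i" "i \<in> {..<n}" then show ?thesis using reachY eZ
      by (metis lessThan_iff rtrancl.rtrancl_into_rtrancl)
  qed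
  have FV: "E \<inter> (V \<times> V) = E" using EV by blast
  define R where "R = E \<union> E\<inverse>"
  have conn: "(v, u) \<in> R\<^sup>*" if "u \<in> V" "v \<in> V" for u v
  proof -
    have "(Y 0, u) \<in> R\<^sup>*" using reach[OF that(1)] rtrancl_mono[of E R] unfolding R_def by blast
    moreover have "(v, Y 0) \<in> (E\<inverse>)\<^sup>*" using reach[OF that(2)] by (simp add: rtrancl_converseI)
    then have "(v, Y 0) \<in> R\<^sup>*" using rtrancl_mono[of "E\<inverse>" R] unfolding R_def by blast
    ultimately show ?thesis by simp
  qed
  have V0: "Y 0 \<in> V" using n V by auto
  have neck: "necklaces V E = {V}"
  proof -
    have "{u \<in> V. (v, u) \<in> R\<^sup>*} = V" if "v \<in> V" for v using conn that by blast
    then have "necklaces V E = {V | v. v \<in> V}" unfolding necklaces_def FV R_def[symmetric] by auto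
    then show ?thesis using V0 by auto
  qed
  have closed: "closed_necklace E V"
    unfolding closed_necklace_def
  proof
    fix v assume "v \<in> V"
    then show "\<exists>u. (u, v) \<in> E" unfolding V
    proof (elim UnE imageE)
      fix j assume j: "v = Y j" "j \<in> {..<n}"
      define p where "p = (j + n - 1) mod n"
      have p: "p < n" using n unfolding p_def by simp
      have "Suc p mod n = Suc (j + n - 1) mod n" unfolding p_def by (simp add: mod_Suc_eq)
      also have "Suc (j + n - 1) = j + n" using n by simp
      also have "(j + n) mod n = j" using j by simp
      finally show ?thesis using eY[OF p] j by metis
    next
      fix j assume "v = Z j" "j \<in> {..<n}" then show ?thesis using eZ by blast
    qed
  qed
  have NO: "N_O V E = 0" unfolding N_O_def neck using closed by simp
  have NL: "N_L V E = n"
  proof -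
    have "{v \<in> V. \<not> (\<exists>w. (v, w) \<in> E)} = Z ` {..<n}"
    proof (intro equalityI subsetI)
      fix v assume "v \<in> {v \<in> V. \<not> (\<exists>w. (v, w) \<in> E)}"
      then show "v \<in> Z ` {..<n}" unfolding V using eZ by blast
    next
      fix v assume "v \<in> Z ` {..<n}"
      then show "v \<in> {v \<in> V. \<not> (\<exists>w. (v, w) \<in> E)}" unfolding V using Z_noout by blast
    qed
    then show ?thesis unfolding N_L_def NO using card_image[OF iZ] by simp
  qed
  have chset: "{w \<in> V. (Y i, w) \<in> E \<and> w \<notin> Y ` {..<n}} = {Z i}" if "i < n" for i
  proof (intro equalityI subsetI)
    fix w assume "w \<in> {w \<in> V. (Y i, w) \<in> E \<and> w \<notin> Y ` {..<n}}"
    then show "w \<in> {Z i}" using E_Y[of i w] that n by auto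
  next
    fix w assume "w \<in> {Z i}"
    then have w: "w = Z i" by simp
    have m1: "Z i \<notin> Y ` {..<n}" using YZ that by (metis imageE lessThan_iff)
    have m2: "Z i \<in> V" using V that by blast
    have m3: "(Y i, Z i) \<in> E" using eZ that by blast
    show "w \<in> {w \<in> V. (Y i, w) \<in> E \<and> w \<notin> Y ` {..<n}}" unfolding w mem_Collect_eq
      using m1 m2 m3 by (intro conjI)
  qed
  have ex: "\<exists>str. necklace_string V E str"
  proof -
    define cyc where "cyc = map Y [0..<n]"
    define chs where "chs = (\<lambda>j::nat. [Z j])"
    have sc: "set cyc = Y ` {..<n}" unfolding cyc_def by auto
    have "necklace_string V E (concat (map (\<lambda>j. [Letter (edge_label (cyc ! ((j + length cyc - 1) mod length cyc), cyc ! j))]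
                 @ concat (map (\<lambda>w. [LParen, Letter (edge_label (cyc ! j, w)), RParen]) (chs j)))
              [0..<length cyc]))"
      unfolding necklace_string_def
    proof (rule exI[of _ cyc], rule exI[of _ chs], intro conjI allI impI refl)
      show "cyc \<noteq> []" using n unfolding cyc_def by simp
      show "distinct cyc" unfolding cyc_def using iY by (simp add: distinct_map atLeast0LessThan)
      show "set cyc \<subseteq> V" unfolding sc V by blast
    next
      fix j assume "j < length cyc"
      then have j: "j < n" unfolding cyc_def by simp
      have "(j + 1) mod n < n" using n by simp
      then show "(cyc ! j, cyc ! ((j + 1) mod length cyc)) \<in> E"
        unfolding cyc_def using j eY by simp
    next
      fix j assume "j < length cyc"
      then have j: "j < n" unfolding cyc_def by simp
      show "distinct (chs j)" unfolding chs_def by simp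
      show "set (chs j) = {w \<in> V. (cyc ! j, w) \<in> E \<and> w \<notin> set cyc}"
        unfolding sc chs_def using chset[OF j] j by (simp add: cyc_def)
      show "\<forall>w\<in>set (chs j). \<not> (\<exists>x. (w, x) \<in> E)" unfolding chs_def using Z_noout j by simp
    qed
    then show ?thesis by blast
  qed
  have count: "length (filter is_letter str) = 2 * n \<and> length (filter is_paren str) = 2 * n \<and> length str = 4 * n"
    if ns: "necklace_string V E str" for str
  proof -
    obtain cyc chs where ne: "cyc \<noteq> []" and dc: "distinct cyc" and sc: "set cyc \<subseteq> V"
      and ed: "\<forall>j<length cyc. (cyc ! j, cyc ! ((j + 1) mod length cyc)) \<in> E"
      and ch: "\<forall>j<length cyc. distinct (chs j) \<and>
            set (chs j) = {w \<in> V. (cyc ! j, w) \<in> E \<and> w \<notin> set cyc} \<and>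
            (\<forall>w\<in>set (chs j). \<not> (\<exists>x. (w, x) \<in> E))"
      and str: "str = concat (map (\<lambda>j. [Letter (edge_label (cyc ! ((j + length cyc - 1) mod length cyc), cyc ! j))]
                 @ concat (map (\<lambda>w. [LParen, Letter (edge_label (cyc ! j, w)), RParen]) (chs j)))
              [0..<length cyc])"
      using ns unfolding necklace_string_def by (elim exE conjE) (rule that, assumption+)
    define L where "L = length cyc"
    have L: "0 < L" using ne unfolding L_def by simp
    have a: "c \<in> Y ` {..<n}" if cin: "c \<in> set cyc" for c
    proof -
      obtain j where j0: "j < length cyc" "cyc ! j = c" using cin by (auto simp: in_set_conv_nth)
      then have j: "j < L" "c = cyc ! j" unfolding L_def by auto
      have "(c, cyc ! ((j+1) mod length cyc)) \<in> E" using ed j unfolding L_def by simp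
      then obtain i where "i < n" "c = Y i" using E_src by blast
      then show ?thesis by blast
    qed
    have b: "Y (Suc i mod n) \<in> set cyc" if bi: "i < n" "Y i \<in> set cyc" for i
    proof -
      obtain j where j0: "j < length cyc" "cyc ! j = Y i" using bi(2) by (auto simp: in_set_conv_nth)
      then have j: "j < L" "Y i = cyc ! j" unfolding L_def by auto
      have m: "cyc ! ((j + 1) mod L) \<in> set cyc" using L unfolding L_def by simp
      have e: "(Y i, cyc ! ((j + 1) mod L)) \<in> E" using ed j unfolding L_def by simp
      have "cyc ! ((j + 1) mod L) \<noteq> Z i" using a[OF m] YZ bi(1) by (metis imageE lessThan_iff)
      then have "cyc ! ((j + 1) mod L) = Y (Suc i mod n)" using E_Y[OF e bi(1)] by blast
      then show ?thesis using m by simp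
    qed
    have c0: "cyc ! 0 \<in> set cyc" using ne by simp
    then have "cyc ! 0 \<in> Y ` {..<n}" by (rule a)
    then obtain i0 where i0': "i0 < n" "cyc ! 0 = Y i0" by auto
    then have i0: "i0 < n" "Y i0 \<in> set cyc" using c0 by auto
    have d: "Y ((i0 + t) mod n) \<in> set cyc" for t
    proof (induction t)
      case 0 then show ?case using i0 by simp
    next
      case (Suc t)
      have "Y (Suc ((i0 + t) mod n) mod n) \<in> set cyc" using b[OF _ Suc] n by simp
      then show ?case by (simp add: mod_Suc_eq)
    qed
    have scY: "set cyc = Y ` {..<n}"
    proof (intro equalityI subsetI)
      fix c assume "c \<in> set cyc" then show "c \<in> Y ` {..<n}" using a by blast
    next
      fix c assume "c \<in> Y ` {..<n}"
      then obtain i where i: "i < n" "c = Y i" by blast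
      have "(i0 + (i + n - i0)) mod n = i" using i i0 by simp
      then show "c \<in> set cyc" using d[of "i + n - i0"] i by simp
    qed
    have Ln: "L = n" unfolding L_def using distinct_card[OF dc] scY card_image[OF iY] by simp
    have blk: "\<exists>w. chs j = [w]" if jL: "j < L" for j
    proof -
      have cj: "cyc ! j \<in> set cyc" using jL unfolding L_def by simp
      then have "cyc ! j \<in> Y ` {..<n}" by (rule a)
      then obtain i where i: "i < n" "cyc ! j = Y i" by auto
      have jL': "j < length cyc" using jL unfolding L_def .
      note chj = ch[rule_format, OF jL']
      have "set (chs j) = {Z i}" using conjunct1[OF conjunct2[OF chj]] unfolding i(2) scY using chset[OF i(1)] by simp
      then have "chs j = [Z i]" using conjunct1[OF chj] distinct_set_single by metis
      then show ?thesis by (rule exI)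
    qed
    define f where "f = (\<lambda>j. [Letter (edge_label (cyc ! ((j + length cyc - 1) mod length cyc), cyc ! j))]
                 @ concat (map (\<lambda>w. [LParen, Letter (edge_label (cyc ! j, w)), RParen]) (chs j)))"
    have fj: "length (filter is_letter (f j)) = 2 \<and> length (filter is_paren (f j)) = 2 \<and> length (f j) = 4"
      if jin: "j \<in> set [0..<L]" for j
    proof -
      have "j < L" using jin by simp
      then obtain w where "chs j = [w]" using blk by blast
      then show ?thesis unfolding f_def by simp
    qed
    have s: "str = concat (map f [0..<L])" using str unfolding f_def L_def by simp
    have "length (filter is_letter str) = length [0..<L] * 2" unfolding s filter_concat map_map
      by (rule len_concat_const) (use fj in simp)
    moreover have "length (filter is_paren str) = length [0..<L] * 2" unfolding s filter_concat map_map
      by (rule len_concat_const) (use fj in simp)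
    moreover have "length str = length [0..<L] * 4" unfolding s
      by (rule len_concat_const) (use fj in simp)
    ultimately show ?thesis using Ln by simp
  qed
  have C4: "\<forall>str. necklace_string V E str \<longrightarrow>
            length (filter is_letter str) = 2 * n \<and>
            length (filter is_paren str) = 2 * n \<and>
            length str = 4 * n" using count by blast
  have C: "\<exists>C. necklaces V E = {C} \<and> closed_necklace E C \<and>
         (\<exists>str. necklace_string C E str) \<and>
         (\<forall>str. necklace_string C E str \<longrightarrow>
            length (filter is_letter str) = 2 * n \<and>
            length (filter is_paren str) = 2 * n \<and>
            length str = 4 * n)"
    by (rule exI[of _ V], intro conjI neck closed ex C4)
  show ?thesis by (intro conjI cardV cover C NO NL)
qed

lemma spss_lower:
  assumes sp: "spss_norep k I S'" and k1: "1 \<le> k"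
    and fin: "finite (spec k I)" and cs: "card (spec k I) = 2 * n"
    and Zs: "Zs \<subseteq> spec k I" and cZ: "card Zs = n"
    and noout: "\<And>w w'. w \<in> Zs \<Longrightarrow> w' \<in> spec k I \<Longrightarrow> drop 1 w \<noteq> take (k-1) w'"
  shows "(k+1) * n \<le> weight S'"
proof -
  have finS: "finite S'" and lenk: "\<And>z. z \<in> S' \<Longrightarrow> k \<le> length z" and spq: "spec k S' = spec k I"
    and one: "\<And>w. w \<in> spec k I \<Longrightarrow> (\<Sum>z\<in>S'. occ k w z) = 1"
    using sp unfolding spss_norep_def by auto
  have kin: "take k (drop i z) \<in> spec k I" if "z \<in> S'" "i + k \<le> length z" for z i
    using that spq unfolding spec_def kmers_def by blast
  have occsum: "(\<Sum>w\<in>spec k I. occ k w z) = length z + 1 - k" if z: "z \<in> S'" for z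
  proof -
    define A where "A = (\<lambda>w. {i. i + k \<le> length z \<and> take k (drop i z) = w})"
    have U: "{i. i + k \<le> length z} = (\<Union>w\<in>spec k I. A w)" unfolding A_def using kin[OF z] by blast
    have fA: "\<forall>w\<in>spec k I. finite (A w)" unfolding A_def by (auto intro: finite_subset[of _ "{..length z}"])
    have dA: "\<forall>w\<in>spec k I. \<forall>w'\<in>spec k I. w \<noteq> w' \<longrightarrow> A w \<inter> A w' = {}" unfolding A_def by blast
    have "card {i. i + k \<le> length z} = (\<Sum>w\<in>spec k I. card (A w))"
      unfolding U by (rule card_UN_disjoint[OF fin fA dA])
    moreover have "{i. i + k \<le> length z} = {..<length z + 1 - k}" using lenk[OF z] by auto
    ultimately show ?thesis unfolding occ_def A_def by simp
  qed
  have tot: "(\<Sum>z\<in>S'. length z + 1 - k) = 2 * n"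
  proof -
    have "(\<Sum>z\<in>S'. length z + 1 - k) = (\<Sum>z\<in>S'. \<Sum>w\<in>spec k I. occ k w z)"
      using occsum by simp
    also have "\<dots> = (\<Sum>w\<in>spec k I. \<Sum>z\<in>S'. occ k w z)" by (rule sum.swap)
    also have "\<dots> = (\<Sum>w\<in>spec k I. 1)" using one by simp
    also have "\<dots> = 2 * n" using cs by simp
    finally show ?thesis .
  qed
  have last: "p + k = length z" if z: "z \<in> S'" and pk: "p + k \<le> length z" and pZ: "take k (drop p z) \<in> Zs" for z p
  proof (rule ccontr)
    assume "p + k \<noteq> length z"
    then have "Suc p + k \<le> length z" using pk by simp
    then have w': "take k (drop (Suc p) z) \<in> spec k I" by (rule kin[OF z])
    have "drop 1 (take k (drop p z)) = take (k-1) (take k (drop (Suc p) z))"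
      by (simp add: drop_take min_def)
    then show False using noout[OF pZ w'] by simp
  qed
  have exz: "\<exists>z. z \<in> S' \<and> occ k w z \<noteq> 0" if w: "w \<in> Zs" for w
  proof (rule ccontr)
    assume "\<not> ?thesis"
    then have "(\<Sum>z\<in>S'. occ k w z) = 0" by simp
    then show False using one[of w] w Zs by auto
  qed
  define g where "g = (\<lambda>w. SOME z. z \<in> S' \<and> occ k w z \<noteq> 0)"
  have g: "g w \<in> S' \<and> occ k w (g w) \<noteq> 0" if "w \<in> Zs" for w
    unfolding g_def using someI_ex[OF exz[OF that]] .
  have pos: "\<exists>p. p + k \<le> length z \<and> take k (drop p z) = w" if "occ k w z \<noteq> 0" for w z
  proof (rule ccontr)
    assume "\<not> ?thesis"
    then have e: "{i. i + k \<le> length z \<and> take k (drop i z) = w} = {}" by blast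
    have "occ k w z = 0" unfolding occ_def e by (rule card.empty)
    then show False using that by simp
  qed
  have inj: "inj_on g Zs"
  proof (rule inj_onI)
    fix w1 w2 assume w1: "w1 \<in> Zs" and w2: "w2 \<in> Zs" and e: "g w1 = g w2"
    obtain p1 where p1: "p1 + k \<le> length (g w1)" "take k (drop p1 (g w1)) = w1" using pos[OF conjunct2[OF g[OF w1]]] by blast
    obtain p2 where p2: "p2 + k \<le> length (g w2)" "take k (drop p2 (g w2)) = w2" using pos[OF conjunct2[OF g[OF w2]]] by blast
    have "p1 + k = length (g w1)" by (rule last[OF conjunct1[OF g[OF w1]] p1(1)]) (simp only: p1(2) w1)
    moreover have "p2 + k = length (g w2)" by (rule last[OF conjunct1[OF g[OF w2]] p2(1)]) (simp only: p2(2) w2)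
    ultimately have pp: "p1 = p2" unfolding e by linarith
    have "w1 = take k (drop p1 (g w1))" using p1(2) by (rule sym)
    also have "\<dots> = take k (drop p2 (g w2))" unfolding pp e ..
    also have "\<dots> = w2" using p2(2) .
    finally show "w1 = w2" .
  qed
  have "card Zs \<le> card S'" using card_inj_on_le[OF inj _ finS] g by blast
  then have cS: "n \<le> card S'" using cZ by simp
  obtain k' where k': "k = Suc k'" using k1 by (cases k) auto
  have "weight S' = (\<Sum>z\<in>S'. (length z + 1 - k) + k')"
    unfolding weight_def
  proof (rule sum.cong)
    fix z assume "z \<in> S'"
    then have "k \<le> length z" by (rule lenk)
    then show "length z = length z + 1 - k + k'" using k' by linarith
  qed simp
  also have "\<dots> = 2 * n + card S' * k'" using tot by (simp add: sum.distrib)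
  finally have "weight S' = 2 * n + card S' * k'" .
  moreover have "(k+1) * n = 2 * n + n * k'" using k' by (simp add: algebra_simps)
  moreover have "n * k' \<le> card S' * k'" using cS by simp
  ultimately show ?thesis by linarith
qed

context
  fixes Sig :: "'a set" and k :: nat and S :: "'a list" and b :: "nat \<Rightarrow> 'a"
  assumes fin: "finite Sig" and c2: "card Sig \<ge> 2" and k4: "k \<ge> 4"
    and dB: "cyclic_de_bruijn Sig (k - 2) S"
    and bb: "\<forall>i < length S. b i \<in> Sig \<and> b i \<noteq> S ! ((i + k) mod length S)"
begin

lemma lenS: "length S = card Sig ^ (k - 2)" using dB by (simp add: cyclic_de_bruijn_def)

lemma n_ge_k: "k \<le> length S"
proof -
  have "(2::nat)^(k-2) \<le> card Sig ^ (k-2)" using c2 by (simp add: power_mono)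
  then show ?thesis using pow_ge[OF k4] lenS by linarith
qed

lemma n_pos: "0 < length S" using n_ge_k k4 by linarith

lemma cs_inj: assumes "k - 2 \<le> a" and "cyc_sub S i a = cyc_sub S j a"
  shows "i mod length S = j mod length S"
proof -
  define w where "w = cyc_sub S i (k-2)"
  have wi: "cyc_sub S (i mod length S) (k-2) = w" unfolding w_def cs_mod ..
  have "cyc_sub S j (k-2) = w" unfolding w_def using assms cs_take[OF assms(1), of S] by metis
  then have wj: "cyc_sub S (j mod length S) (k-2) = w" unfolding cs_mod .
  have "set w \<subseteq> Sig" using cs_set[OF n_pos] dB unfolding w_def cyclic_de_bruijn_def by blast
  then have "card {p. p < length S \<and> cyc_sub S p (k - 2) = w} = 1"
    using dB unfolding cyclic_de_bruijn_def w_def by (metis cs_len)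
  then obtain x where x: "{p. p < length S \<and> cyc_sub S p (k - 2) = w} = {x}"
    using card_1_singleton_iff by (metis One_nat_def)
  have "i mod length S \<in> {x}" "j mod length S \<in> {x}"
    using wi wj n_pos x[symmetric] by auto
  then show ?thesis by simp
qed

lemma y_inj: "i < length S \<Longrightarrow> j < length S \<Longrightarrow> ykmer S k i = ykmer S k j \<Longrightarrow> i = j"
  unfolding ykmer_def using cs_inj[of k i j] by simp

lemma ysnoc: "ykmer S k j = cyc_sub S j (k-1) @ [S ! ((j + (k-1)) mod length S)]"
proof -
  have "k = Suc (k-1)" using k4 by simp
  then show ?thesis unfolding ykmer_def by (metis cs_snoc)
qed

lemma z_inj: "i < length S \<Longrightarrow> j < length S \<Longrightarrow> zkmer S k b i = zkmer S k b j \<Longrightarrow> i = j"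
  unfolding zkmer_def using cs_inj[of "k-1" "Suc i" "Suc j"] modsuc_inj by simp

lemma yz_ne: assumes "i < length S" "j < length S" shows "ykmer S k j \<noteq> zkmer S k b i"
proof
  assume "ykmer S k j = zkmer S k b i"
  then have e1: "cyc_sub S j (k-1) = cyc_sub S (Suc i) (k-1)" and e2: "S ! ((j + (k-1)) mod length S) = b i"
    unfolding ysnoc zkmer_def by auto
  have "j mod length S = Suc i mod length S" using cs_inj[of "k-1" j "Suc i"] e1 by simp
  then have "(j + (k-1)) mod length S = (Suc i + (k-1)) mod length S" by (metis mod_add_left_eq)
  also have "Suc i + (k-1) = i + k" using k4 by simp
  finally show False using e2 bb assms by auto
qed

lemma z_noout: assumes "i < length S" shows "drop 1 (zkmer S k b i) \<noteq> cyc_sub S p (k-1)"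
proof
  assume a: "drop 1 (zkmer S k b i) = cyc_sub S p (k-1)"
  have "drop 1 (zkmer S k b i) = cyc_sub S (Suc (Suc i)) (k-2) @ [b i]"
    unfolding zkmer_def using k4 cs_drop1'[of S "Suc i" "k-1"] by (simp add: numeral_2_eq_2)
  moreover have "cyc_sub S p (k-1) = cyc_sub S p (k-2) @ [S ! ((p + (k-2)) mod length S)]"
  proof -
    have "k - 1 = Suc (k-2)" using k4 by simp
    then show ?thesis by (metis cs_snoc)
  qed
  ultimately have e1: "cyc_sub S (Suc (Suc i)) (k-2) = cyc_sub S p (k-2)" and e2: "b i = S ! ((p + (k-2)) mod length S)"
    using a by auto
  have "p mod length S = Suc (Suc i) mod length S" using cs_inj[of "k-2" p "Suc (Suc i)"] e1[symmetric] by simp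
  then have "(p + (k-2)) mod length S = (Suc (Suc i) + (k-2)) mod length S" by (metis mod_add_left_eq)
  also have "Suc (Suc i) + (k-2) = i + k" using k4 by simp
  finally show False using e2 bb assms by auto
qed

lemma X_kmer: assumes "i \<le> length S" shows "take k (drop i (S @ take k S)) = ykmer S k i"
proof (rule nth_equalityI)
  show "length (take k (drop i (S @ take k S))) = length (ykmer S k i)"
    using n_ge_k assms by (simp add: ykmer_def)
next
  fix j assume "j < length (take k (drop i (S @ take k S)))"
  then have j: "j < k" by (metis length_take min_less_iff_conj)
  have "take k (drop i (S @ take k S)) ! j = drop i (S @ take k S) ! j"
    using j by (rule nth_take)
  also have "\<dots> = (S @ take k S) ! (i + j)"
    using assms by (simp add: nth_drop del: drop_append)
  also have "\<dots> = S ! ((i + j) mod length S)"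
  proof (cases "i + j < length S")
    case True then show ?thesis by (simp add: nth_append)
  next
    case False
    then have "(i + j) mod length S = i + j - length S"
      using j n_ge_k assms by (simp add: le_mod_geq)
    moreover have "i + j - length S < k" using j assms by linarith
    ultimately show ?thesis using False by (simp add: nth_append)
  qed
  also have "\<dots> = ykmer S k i ! j" using j by (simp add: ykmer_def)
  finally show "take k (drop i (S @ take k S)) ! j = ykmer S k i ! j" .
qed

lemma kmersX: "kmers k (S @ take k S) = ykmer S k ` {..<length S}"
proof (intro equalityI subsetI)
  fix x assume "x \<in> kmers k (S @ take k S)"
  then obtain i where i: "i + k \<le> length (S @ take k S)" "x = take k (drop i (S @ take k S))"
    unfolding kmers_def by auto
  then have il: "i \<le> length S" using n_ge_k by simp
  then have x: "x = ykmer S k i" using X_kmer i by simp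
  show "x \<in> ykmer S k ` {..<length S}"
  proof (cases "i = length S")
    case True
    then have "x = ykmer S k 0" using x cs_mod[of S i k] by (simp add: ykmer_def)
    then show ?thesis using n_pos by auto
  next
    case False then show ?thesis using il x by auto
  qed
next
  fix x assume "x \<in> ykmer S k ` {..<length S}"
  then obtain i where "i < length S" "x = ykmer S k i" by auto
  then show "x \<in> kmers k (S @ take k S)" unfolding kmers_def using X_kmer n_ge_k
    by (auto intro!: exI[of _ i])
qed

lemma kmersYb: "kmers k (ykmer S k i @ [b i]) = {ykmer S k i, zkmer S k b i}"
proof -
  have l: "length (ykmer S k i @ [b i]) = Suc k" by (simp add: ykmer_def)
  have d: "drop 1 (ykmer S k i @ [b i]) = zkmer S k b i"
    using k4 by (simp add: ykmer_def zkmer_def cs_drop1')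
  have t: "take k (ykmer S k i @ [b i]) = ykmer S k i" by (simp add: ykmer_def)
  show ?thesis by (simp only: kmers_k1[OF l] t d)
qed

lemma specI: "spec k (inst S k b) = ykmer S k ` {..<length S} \<union> zkmer S k b ` {..<length S}"
proof -
  have A: "{ykmer S k i @ [b i] | i. i < length S} = (\<lambda>i. ykmer S k i @ [b i]) ` {..<length S}" by blast
  have "spec k (inst S k b) = kmers k (S @ take k S) \<union> (\<Union>i<length S. kmers k (ykmer S k i @ [b i]))"
    unfolding spec_def inst_def A by (simp only: image_insert Union_insert image_image)
  also have "(\<Union>i<length S. kmers k (ykmer S k i @ [b i])) = (\<Union>i<length S. {ykmer S k i, zkmer S k b i})"
    by (simp only: kmersYb)
  also have "\<dots> = ykmer S k ` {..<length S} \<union> zkmer S k b ` {..<length S}" by blast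
  finally show ?thesis unfolding kmersX by blast
qed

lemma edgesI: "dbg_edges k (inst S k b) =
      {(ykmer S k i, ykmer S k ((i + 1) mod length S)) | i. i < length S} \<union>
      {(ykmer S k i, zkmer S k b i) | i. i < length S}"
proof -
  have dY: "drop 1 (ykmer S k i) = cyc_sub S (Suc i) (k-1)" for i by (simp add: ykmer_def cs_drop1')
  have tY: "take (k-1) (ykmer S k j) = cyc_sub S j (k-1)" for j by (simp add: ykmer_def cs_take)
  have tZ: "take (k-1) (zkmer S k b j) = cyc_sub S (Suc j) (k-1)" for j by (simp add: zkmer_def)
  show ?thesis unfolding dbg_edges_def specI
  proof (intro equalityI subsetI)
    fix e assume "e \<in> {(u, v). u \<in> ykmer S k ` {..<length S} \<union> zkmer S k b ` {..<length S} \<and>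
                 v \<in> ykmer S k ` {..<length S} \<union> zkmer S k b ` {..<length S} \<and> drop 1 u = take (k - 1) v}"
    then obtain u v where e: "e = (u, v)" and u: "u \<in> ykmer S k ` {..<length S} \<union> zkmer S k b ` {..<length S}"
      and v: "v \<in> ykmer S k ` {..<length S} \<union> zkmer S k b ` {..<length S}" and r: "drop 1 u = take (k - 1) v"
      by auto
    have "\<exists>p. take (k-1) v = cyc_sub S p (k-1)" using v
    proof (elim UnE imageE)
      fix x assume "v = ykmer S k x" then show ?thesis using tY by blast
    next
      fix x assume "v = zkmer S k b x" then show ?thesis using tZ by blast
    qed
    then obtain p where p: "take (k-1) v = cyc_sub S p (k-1)" by blast
    have "u \<notin> zkmer S k b ` {..<length S}"
    proof
      assume "u \<in> zkmer S k b ` {..<length S}"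
      then obtain i' where "i' < length S" "u = zkmer S k b i'" by blast
      then show False using z_noout[of i' p] r p by simp
    qed
    then have "u \<in> ykmer S k ` {..<length S}" using u by blast
    then obtain i where i: "i < length S" "u = ykmer S k i" by blast
    from v show "e \<in> {(ykmer S k i, ykmer S k ((i + 1) mod length S)) | i. i < length S} \<union>
      {(ykmer S k i, zkmer S k b i) | i. i < length S}"
    proof
      assume "v \<in> ykmer S k ` {..<length S}"
      then obtain j where j: "j < length S" "v = ykmer S k j" by auto
      then have "cyc_sub S (Suc i) (k-1) = cyc_sub S j (k-1)" using r i dY tY by simp
      then have "Suc i mod length S = j mod length S" using cs_inj[of "k-1" "Suc i" j] by simp
      then have "j = (i+1) mod length S" using j by simp
      then have "e = (ykmer S k i, ykmer S k ((i+1) mod length S))" using e i j by simp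
      then show ?thesis using i(1) by blast
    next
      assume "v \<in> zkmer S k b ` {..<length S}"
      then obtain j where j: "j < length S" "v = zkmer S k b j" by auto
      then have "cyc_sub S (Suc i) (k-1) = cyc_sub S (Suc j) (k-1)" using r i dY tZ by simp
      then have "Suc i mod length S = Suc j mod length S" using cs_inj[of "k-1" "Suc i" "Suc j"] by simp
      then have "j = i" using i j modsuc_inj by metis
      then have "e = (ykmer S k i, zkmer S k b i)" using e i j by simp
      then show ?thesis using i(1) by blast
    qed
  next
    fix e assume "e \<in> {(ykmer S k i, ykmer S k ((i + 1) mod length S)) | i. i < length S} \<union>
      {(ykmer S k i, zkmer S k b i) | i. i < length S}"
    then obtain i where i: "i < length S" and ei:
      "e = (ykmer S k i, ykmer S k ((i + 1) mod length S)) \<or> e = (ykmer S k i, zkmer S k b i)" by auto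
    have m1: "ykmer S k i \<in> ykmer S k ` {..<length S} \<union> zkmer S k b ` {..<length S}" using i by blast
    have m2: "ykmer S k ((i + 1) mod length S) \<in> ykmer S k ` {..<length S} \<union> zkmer S k b ` {..<length S}"
      using n_pos by simp
    have m3: "zkmer S k b i \<in> ykmer S k ` {..<length S} \<union> zkmer S k b ` {..<length S}" using i by blast
    have r1: "drop 1 (ykmer S k i) = take (k-1) (ykmer S k ((i + 1) mod length S))"
      unfolding dY tY cs_mod by simp
    have r2: "drop 1 (ykmer S k i) = take (k-1) (zkmer S k b i)"
      unfolding dY tZ by simp
    show "e \<in> {(u, v). u \<in> ykmer S k ` {..<length S} \<union> zkmer S k b ` {..<length S} \<and>
                 v \<in> ykmer S k ` {..<length S} \<union> zkmer S k b ` {..<length S} \<and> drop 1 u = take (k - 1) v}"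
      using ei
    proof (elim disjE)
      assume "e = (ykmer S k i, ykmer S k ((i + 1) mod length S))"
      then show ?thesis using m1 m2 r1 by (simp only: mem_Collect_eq prod.case)
    next
      assume "e = (ykmer S k i, zkmer S k b i)"
      then show ?thesis using m1 m3 r2 by (simp only: mem_Collect_eq prod.case)
    qed
  qed
qed


lemma tY: "take (k-1) (ykmer S k j) = cyc_sub S j (k-1)" by (simp add: ykmer_def cs_take)
lemma tZ: "take (k-1) (zkmer S k b j) = cyc_sub S (Suc j) (k-1)" by (simp add: zkmer_def)

lemma yb_take: "take k (ykmer S k i @ [b i]) = ykmer S k i" by (simp add: ykmer_def)
lemma yb_drop: "drop 1 (ykmer S k i @ [b i]) = zkmer S k b i"
  using k4 by (simp add: ykmer_def zkmer_def cs_drop1')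
lemma yb_len: "length (ykmer S k i @ [b i]) = Suc k" by (simp add: ykmer_def)

lemma upper: "\<exists>S'. spss_norep k (inst S k b) S' \<and> weight S' = (k + 1) * length S"
proof -
  define S' where "S' = (\<lambda>i. ykmer S k i @ [b i]) ` {..<length S}"
  have inj: "inj_on (\<lambda>i. ykmer S k i @ [b i]) {..<length S}"
  proof (rule inj_onI)
    fix i j assume i: "i \<in> {..<length S}" and j: "j \<in> {..<length S}"
      and e: "ykmer S k i @ [b i] = ykmer S k j @ [b j]"
    then have "ykmer S k i = ykmer S k j" by simp
    then show "i = j" using y_inj i j by simp
  qed
  have spq: "spec k S' = spec k (inst S k b)"
  proof -
    have "spec k S' = (\<Union>i<length S. kmers k (ykmer S k i @ [b i]))"
      unfolding spec_def S'_def by (simp only: image_image)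
    also have "\<dots> = (\<Union>i<length S. {ykmer S k i, zkmer S k b i})" by (simp only: kmersYb)
    also have "\<dots> = ykmer S k ` {..<length S} \<union> zkmer S k b ` {..<length S}" by blast
    finally show ?thesis unfolding specI .
  qed
  have occe: "occ k w (ykmer S k i @ [b i]) = (if ykmer S k i = w then 1 else 0) + (if zkmer S k b i = w then 1 else 0)" for w i
    using occ_k1[OF yb_len, of w i] unfolding yb_take yb_drop .
  have one: "(\<Sum>z\<in>S'. occ k w z) = 1" if w: "w \<in> spec k (inst S k b)" for w
  proof -
    have "(\<Sum>z\<in>S'. occ k w z) = (\<Sum>i<length S. occ k w (ykmer S k i @ [b i]))"
      unfolding S'_def by (rule sum.reindex[OF inj, unfolded comp_def])
    also have "\<dots> = (\<Sum>i<length S. (if ykmer S k i = w then 1 else 0)) + (\<Sum>i<length S. (if zkmer S k b i = w then 1 else 0))"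
      unfolding occe by (rule sum.distrib)
    also have "\<dots> = 1"
    proof -
      from w consider (Y) j where "j < length S" "w = ykmer S k j" | (Z) j where "j < length S" "w = zkmer S k b j"
        unfolding specI by blast
      then show ?thesis
      proof cases
        case Y
        have "(\<Sum>i<length S. (if ykmer S k i = w then 1 else 0)) = (\<Sum>i<length S. (if i = j then 1 else (0::nat)))"
          using Y y_inj by (intro sum.cong) auto
        also have "\<dots> = 1" using Y by simp
        finally have 1: "(\<Sum>i<length S. (if ykmer S k i = w then 1 else 0)) = (1::nat)" .
        have "(\<Sum>i<length S. (if zkmer S k b i = w then 1 else 0)) = (\<Sum>i<length S. (0::nat))"
        proof (rule sum.cong[OF refl])
          fix x assume "x \<in> {..<length S}"
          then have "zkmer S k b x \<noteq> w" using yz_ne[of x j] Y by auto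
          then show "(if zkmer S k b x = w then 1 else 0) = (0::nat)" by simp
        qed
        then show ?thesis using 1 by simp
      next
        case Z
        have "(\<Sum>i<length S. (if zkmer S k b i = w then 1 else 0)) = (\<Sum>i<length S. (if i = j then 1 else (0::nat)))"
          using Z z_inj by (intro sum.cong) auto
        also have "\<dots> = 1" using Z by simp
        finally have 1: "(\<Sum>i<length S. (if zkmer S k b i = w then 1 else 0)) = (1::nat)" .
        have "(\<Sum>i<length S. (if ykmer S k i = w then 1 else 0)) = (\<Sum>i<length S. (0::nat))"
        proof (rule sum.cong[OF refl])
          fix x assume "x \<in> {..<length S}"
          then have "ykmer S k x \<noteq> w" using yz_ne[of j x] Z by auto
          then show "(if ykmer S k x = w then 1 else 0) = (0::nat)" by simp
        qed
        then show ?thesis using 1 by simp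
      qed
    qed
    finally show ?thesis .
  qed
  have "spss_norep k (inst S k b) S'"
    unfolding spss_norep_def
  proof (intro conjI ballI)
    show "finite S'" unfolding S'_def by simp
    show "spec k S' = spec k (inst S k b)" by (rule spq)
  next
    fix z assume "z \<in> S'" then show "k \<le> length z" unfolding S'_def by (auto simp: ykmer_def)
  next
    fix w assume "w \<in> spec k (inst S k b)" then show "(\<Sum>z\<in>S'. occ k w z) = 1" by (rule one)
  qed
  moreover have "weight S' = (k + 1) * length S"
  proof -
    have "weight S' = (\<Sum>i<length S. length (ykmer S k i @ [b i]))"
      unfolding weight_def S'_def by (rule sum.reindex[OF inj, unfolded comp_def])
    also have "\<dots> = (\<Sum>i<length S. Suc k)" by (simp only: yb_len)
    finally show ?thesis by simp
  qed
  ultimately show ?thesis by blast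
qed

end

theorem mainTheorem6:
  fixes Sig :: "'a set" and k :: nat and S :: "'a list" and b :: "nat \<Rightarrow> 'a"
  assumes "finite Sig" and "card Sig \<ge> 2" and "k \<ge> 4"
    and "cyclic_de_bruijn Sig (k - 2) S"
    and "\<forall>i < length S. b i \<in> Sig \<and> b i \<noteq> S ! ((i + k) mod length S)"
  shows
   "length S = card Sig ^ (k - 2) \<and>
    dbg_nodes k (inst S k b) =
      {ykmer S k i | i. i < length S} \<union> {zkmer S k b i | i. i < length S} \<and>
    card (dbg_nodes k (inst S k b)) = 2 * length S \<and>
    dbg_edges k (inst S k b) =
      {(ykmer S k i, ykmer S k ((i + 1) mod length S)) | i. i < length S} \<union>
      {(ykmer S k i, zkmer S k b i) | i. i < length S} \<and>
    necklace_cover (dbg_nodes k (inst S k b)) (dbg_edges k (inst S k b)) (dbg_edges k (inst S k b)) \<and>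
    (\<exists>C. necklaces (dbg_nodes k (inst S k b)) (dbg_edges k (inst S k b)) = {C} \<and>
         closed_necklace (dbg_edges k (inst S k b)) C \<and>
         (\<exists>str. necklace_string C (dbg_edges k (inst S k b)) str) \<and>
         (\<forall>str. necklace_string C (dbg_edges k (inst S k b)) str \<longrightarrow>
            length (filter is_letter str) = 2 * length S \<and>
            length (filter is_paren str) = 2 * length S \<and>
            length str = 4 * length S)) \<and>
    N_O (dbg_nodes k (inst S k b)) (dbg_edges k (inst S k b)) = 0 \<and>
    N_L (dbg_nodes k (inst S k b)) (dbg_edges k (inst S k b)) = length S \<and>
    (\<forall>S'. spss_norep k (inst S k b) S' \<longrightarrow> weight S' \<ge> (k + 1) * length S) \<and>
    (\<exists>S'. spss_norep k (inst S k b) S' \<and> weight S' = (k + 1) * length S)"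
proof -
  let ?I = "inst S k b"
  let ?Y = "ykmer S k" and ?Z = "zkmer S k b" and ?n = "length S"
  have npos: "0 < ?n" using n_pos[OF assms] .
  have iY: "inj_on ?Y {..<?n}" using y_inj[OF assms] by (intro inj_onI) simp
  have iZ: "inj_on ?Z {..<?n}" using z_inj[OF assms] by (intro inj_onI) simp
  have YZ: "\<And>i j. i < ?n \<Longrightarrow> j < ?n \<Longrightarrow> ?Y i \<noteq> ?Z j" using yz_ne[OF assms] by blast
  have V: "dbg_nodes k ?I = ?Y ` {..<?n} \<union> ?Z ` {..<?n}" unfolding dbg_nodes_def by (rule specI[OF assms])
  have E: "dbg_edges k ?I = {(?Y i, ?Y ((i + 1) mod ?n)) | i. i < ?n} \<union> {(?Y i, ?Z i) | i. i < ?n}"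
    by (rule edgesI[OF assms])
  note gp = graph_part[OF npos iY iZ YZ V E]
  have cardV: "card (dbg_nodes k ?I) = 2 * ?n" using gp by blast
  have lower: "\<forall>S'. spss_norep k ?I S' \<longrightarrow> weight S' \<ge> (k + 1) * ?n"
  proof (intro allI impI)
    fix S' assume sp: "spss_norep k ?I S'"
    show "weight S' \<ge> (k + 1) * ?n"
    proof (rule spss_lower[OF sp])
      show "1 \<le> k" using assms(3) by simp
      show "finite (spec k ?I)" using V unfolding dbg_nodes_def by simp
      show "card (spec k ?I) = 2 * ?n" using cardV unfolding dbg_nodes_def .
      show "?Z ` {..<?n} \<subseteq> spec k ?I" using V unfolding dbg_nodes_def by blast
      show "card (?Z ` {..<?n}) = ?n" using card_image[OF iZ] by simp
    next
      fix w w' assume w: "w \<in> ?Z ` {..<?n}" and w': "w' \<in> spec k ?I"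
      obtain i where i: "i < ?n" "w = ?Z i" using w by blast
      have "\<exists>p. take (k-1) w' = cyc_sub S p (k-1)"
        using w' unfolding specI[OF assms]
      proof (elim UnE imageE)
        fix x assume "w' = ?Y x" then show ?thesis using tY[OF assms] by blast
      next
        fix x assume "w' = ?Z x" then show ?thesis using tZ[OF assms] by blast
      qed
      then obtain p where p: "take (k-1) w' = cyc_sub S p (k-1)" by blast
      show "drop 1 w \<noteq> take (k - 1) w'" unfolding p i(2) by (rule z_noout[OF assms i(1)])
    qed
  qed
  have up: "\<exists>S'. spss_norep k ?I S' \<and> weight S' = (k + 1) * ?n" by (rule upper[OF assms])
  note g2 = conjunct1[OF conjunct2[OF gp]]
  note g3 = conjunct1[OF conjunct2[OF conjunct2[OF gp]]]
  note g4 = conjunct1[OF conjunct2[OF conjunct2[OF conjunct2[OF gp]]]]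
  note g5 = conjunct2[OF conjunct2[OF conjunct2[OF conjunct2[OF gp]]]]
  show ?thesis
    unfolding setof_image[of ?Y ?n] setof_image[of ?Z ?n]
    by (intro conjI lenS[OF assms] V cardV E g2 g3 g4 g5 lower up)
qed

end
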